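(* Let $f$ be a Dirichlet series mapping $\mathbb{C}_0$ to $\mathbb{D}$. Then \[\limsup_{T\to \infty} N_f(\xi,T) \leq \log\left|\frac{1-\overline{\xi}f(+\infty)}{\xi-f(+\infty)}\right|\] for every $\xi$ in $\mathbb{D} \setminus \{f(+\infty)\}$.
   Context: $\mathbb{C}_\kappa=\{s:\mathrm{Re}\,s>\kappa\}$ and $\mathbb{D}$ is the open unit disc. A "Dirichlet series mapping $\mathbb{C}_0$ to $\mathbb{D}$" is an analytic function $f:\mathbb{C}_0\to\mathbb{D}$ represented by a Dirichlet series $\sum_{n\ge1}a_nn^{-s}$ converging in $\mathbb{C}_\kappa$ for some $\kappa>0$; $f(+\infty)=a_1$. For $T>0$ and $\xi\in\mathbb{D}$, $N_f(\xi,T)=\frac{\pi}{T}\sum\mathrm{Re}\,s$, summing over all $s\in\mathbb{C}_0$ with $f(s)=\xi$ and $|\mathrm{Im}\,s|<T$, counted with multiplicity. *)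

theory Defs
  imports "HOL-Complex_Analysis.Complex_Analysis"
begin

definition halfplane :: "real \<Rightarrow> complex set" where
  "halfplane k = {s. Re s > k}"

text \<open>f is a Dirichlet series mapping C_0 to the unit disc D, with coefficient
  sequence a (a n is the coefficient of n^(-s), n \<ge> 1; a 0 is irrelevant):
  f is analytic on C_0, maps C_0 into D, and for some kappa > 0 the series
  sum_{n\<ge>1} a n * n^(-s) converges to f s for every s in C_kappa.
  Then f(+infinity) = a 1.\<close>
definition dirichlet_C0_to_D :: "(complex \<Rightarrow> complex) \<Rightarrow> (nat \<Rightarrow> complex) \<Rightarrow> bool" where
  "dirichlet_C0_to_D f a \<longleftrightarrow>
     f holomorphic_on halfplane 0 \<and>
     (\<forall>s\<in>halfplane 0. f s \<in> ball 0 1) \<and>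
     (\<exists>\<kappa>>0. \<forall>s\<in>halfplane \<kappa>.
        (\<lambda>n. a (Suc n) * of_nat (Suc n) powr (- s)) sums f s)"

text \<open>The sum has
  nonnegative terms and is taken in [0,\<infinity>] (ennreal), then viewed in ereal.\<close>
definition N_count :: "(complex \<Rightarrow> complex) \<Rightarrow> complex \<Rightarrow> real \<Rightarrow> ereal" where
  "N_count f \<xi> T = ereal (pi / T) *
     enn2ereal (\<Sum>\<^sub>\<infinity> s\<in>{s\<in>halfplane 0. \<bar>Im s\<bar> < T \<and> f s = \<xi>}.
        ennreal (real (nat (zorder (\<lambda>z. f z - \<xi>) s)) * Re s))"

end

theory Submission
  imports Defs
begin

definition bl :: "complex \<Rightarrow> complex \<Rightarrow> complex" where
  "bl s z = (z - s) / (z + cnj s)"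

lemma Re_pos_nz: "Re z > 0 \<Longrightarrow> Re s > 0 \<Longrightarrow> z + cnj s \<noteq> 0"
proof
  assume "Re z > 0" "Re s > 0" "z + cnj s = 0"
  then have "Re (z + cnj s) = 0" by simp
  with \<open>Re z > 0\<close> \<open>Re s > 0\<close> show False by simp
qed

lemma bl_norm_sq:
  assumes "Re z > 0" "Re s > 0"
  shows "(cmod (bl s z))^2 = 1 - 4 * Re z * Re s / ((Re z + Re s)^2 + (Im z - Im s)^2)"
proof -
  have d: "(Re z + Re s)^2 + (Im z - Im s)^2 > 0" using assms
    by (metis add_pos_nonneg add_pos_pos zero_less_power zero_le_power2)
  have "(cmod (bl s z))^2 = (cmod (z - s))^2 / (cmod (z + cnj s))^2"
    by (simp add: bl_def norm_divide power_divide)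
  also have "\<dots> = ((Re z - Re s)^2 + (Im z - Im s)^2) / ((Re z + Re s)^2 + (Im z - Im s)^2)"
    by (simp add: cmod_power2)
  also have "\<dots> = 1 - 4 * Re z * Re s / ((Re z + Re s)^2 + (Im z - Im s)^2)"
    using d by (simp add: field_simps power2_eq_square)
  finally show ?thesis .
qed

lemma bl_norm_lt1:
  assumes "Re z > 0" "Re s > 0"
  shows "cmod (bl s z) < 1"
proof -
  have d: "(Re z + Re s)^2 + (Im z - Im s)^2 > 0" using assms
    by (metis add_pos_nonneg add_pos_pos zero_less_power zero_le_power2)
  have "4 * Re z * Re s / ((Re z + Re s)^2 + (Im z - Im s)^2) > 0"
    using assms d by simp
  then have "(cmod (bl s z))^2 < 1" using bl_norm_sq[OF assms] by linarith
  then show ?thesis by (metis abs_norm_cancel abs_square_less_1)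
qed

definition blinv :: "complex \<Rightarrow> complex \<Rightarrow> complex" where
  "blinv s w = (s + w * cnj s) / (1 - w)"

lemma blinv_Re:
  assumes "cmod w < 1" "Re s > 0"
  shows "Re (blinv s w) > 0"
proof -
  have w1: "1 - w \<noteq> 0" using assms(1) by auto
  have "Re ((s + w * cnj s) * cnj (1 - w)) = Re s * (1 - (cmod w)^2)"
    unfolding cmod_power2 by (simp add: algebra_simps power2_eq_square)
  moreover have "(cmod w)^2 < 1" using assms(1)
    by (metis abs_norm_cancel abs_square_less_1)
  ultimately have p: "Re ((s + w * cnj s) * cnj (1 - w)) > 0" using assms(2) by simp
  have c: "cnj (1-w) \<noteq> 0" using w1 by simp
  have "blinv s w = (s + w * cnj s) * cnj (1 - w) / ((1 - w) * cnj (1 - w))"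
    using c by (simp add: blinv_def)
  also have "\<dots> = (s + w * cnj s) * cnj (1 - w) / of_real ((cmod (1 - w))^2)"
    by (simp only: complex_norm_square)
  finally have "blinv s w = (s + w * cnj s) * cnj (1 - w) / of_real ((cmod (1 - w))^2)" .
  then have "Re (blinv s w) = Re ((s + w * cnj s) * cnj (1 - w)) / (cmod (1 - w))^2"
    by (simp add: Re_divide_of_real)
  then show ?thesis using p w1 by simp
qed

lemma blinv_bl:
  assumes "Re z > 0" "Re s > 0"
  shows "blinv s (bl s z) = z"
proof -
  have n: "z + cnj s \<noteq> 0" using Re_pos_nz assms by blast
  have n2: "s + cnj s \<noteq> 0" using Re_pos_nz assms by blast
  have e1: "s + (z - s) / (z + cnj s) * cnj s = z * (s + cnj s) / (z + cnj s)"
    using n by (simp add: field_simps)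
  have e2: "1 - (z - s) / (z + cnj s) = (s + cnj s) / (z + cnj s)"
    using n by (simp add: field_simps)
  show ?thesis unfolding blinv_def bl_def e1 e2 using n n2 by simp
qed

lemma le_by_scaling:
  fixes a b :: real
  assumes "\<And>r. 0 < r \<Longrightarrow> r < 1 \<Longrightarrow> r * a \<le> b" "0 \<le> b"
  shows "a \<le> b"
proof (rule ccontr)
  assume "\<not> a \<le> b"
  then have ab: "b < a" by simp
  then have a0: "a > 0" using assms(2) by linarith
  define r where "r = (1 + b / a) / 2"
  have "b / a < 1" using ab a0 by simp
  moreover have "0 \<le> b / a" using a0 assms(2) by simp
  ultimately have r: "0 < r" "r < 1" unfolding r_def by auto
  have "r * a = (a + b) / 2" unfolding r_def using a0 by (simp add: field_simps)
  then have "r * a > b" using ab by simp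
  with assms(1)[OF r] show False by simp
qed

lemma schwarz_half:
  assumes holo: "h holomorphic_on {z. Re z > 0}"
    and bd: "\<And>z. Re z > 0 \<Longrightarrow> cmod (h z) \<le> 1"
    and s: "Re s > 0" and hs: "h s = 0" and z: "Re z > 0"
  shows "cmod (h z) \<le> cmod (bl s z)"
proof (rule le_by_scaling)
  fix r :: real assume r: "0 < r" "r < 1"
  define F where "F w = complex_of_real r * h (blinv s w)" for w
  have img: "blinv s ` ball 0 1 \<subseteq> {z. Re z > 0}"
    using blinv_Re s by auto
  have hb: "blinv s holomorphic_on ball 0 1"
    unfolding blinv_def by (intro holomorphic_intros) auto
  have "F holomorphic_on ball 0 1"
    unfolding F_def
    by (intro holomorphic_intros holomorphic_on_compose_gen[OF hb holo img, unfolded o_def])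
  moreover have "F 0 = 0" unfolding F_def blinv_def using hs by simp
  moreover have "cmod (F w) < 1" if "cmod w < 1" for w
  proof -
    have "cmod (h (blinv s w)) \<le> 1" using bd blinv_Re[OF that s] by blast
    then have "cmod (F w) \<le> r" unfolding F_def using r by (simp add: norm_mult)
    then show ?thesis using r by simp
  qed
  moreover have "cmod (bl s z) < 1" using bl_norm_lt1 z s by blast
  ultimately have "cmod (F (bl s z)) \<le> cmod (bl s z)" by (rule Schwarz_Lemma(1))
  then show "r * cmod (h z) \<le> cmod (bl s z)"
    unfolding F_def blinv_bl[OF z s] using r by (simp add: norm_mult)
qed simp

definition ordge :: "(complex \<Rightarrow> complex) \<Rightarrow> complex \<Rightarrow> nat \<Rightarrow> bool" where
  "ordge h s m \<longleftrightarrow> (\<exists>r>0. \<exists>k. k holomorphic_on ball s r \<and>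
      (\<forall>z\<in>ball s r - {s}. h z = (z - s)^m * k z))"

lemma openH: "open {z::complex. Re z > 0}" by (rule open_halfspace_Re_gt)

lemma ordge_zero:
  assumes holo: "h holomorphic_on {z. Re z > 0}" and s: "Re s > 0"
    and o: "ordge h s m" and m: "m > 0"
  shows "h s = 0"
proof -
  obtain r k where r: "r > 0" and k: "k holomorphic_on ball s r"
    and eq: "\<forall>z\<in>ball s r - {s}. h z = (z - s)^m * k z"
    using o unfolding ordge_def by blast
  have "isCont k s"
    using k r holomorphic_on_imp_continuous_on continuous_on_interior interior_ball
    by (metis centre_in_ball)
  then have "(k \<longlongrightarrow> k s) (at s)" by (simp add: isCont_def)
  moreover have "((\<lambda>z. (z - s)^m) \<longlongrightarrow> (s - s)^m) (at s)"
    by (intro tendsto_intros)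
  ultimately have "((\<lambda>z. (z - s)^m * k z) \<longlongrightarrow> (s - s)^m * k s) (at s)"
    by (intro tendsto_mult)
  then have l1: "((\<lambda>z. (z - s)^m * k z) \<longlongrightarrow> 0) (at s)"
    using m by (simp add: zero_power)
  have "isCont h s"
    using holo s openH holomorphic_on_imp_continuous_on continuous_on_interior interior_open
    by (metis mem_Collect_eq)
  then have l2: "(h \<longlongrightarrow> h s) (at s)" by (simp add: isCont_def)
  have ev: "eventually (\<lambda>z. (z - s)^m * k z = h z) (at s)"
    unfolding eventually_at using r eq by (auto simp: dist_commute)
  have "((\<lambda>z. h z) \<longlongrightarrow> 0) (at s)"
    using tendsto_cong[OF ev] l1 by simp
  then show ?thesis using l2 tendsto_unique by (metis trivial_limit_at)
qed

definition divh :: "(complex \<Rightarrow> complex) \<Rightarrow> complex \<Rightarrow> complex \<Rightarrow> complex" where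
  "divh h s z = (if z = s then deriv h s else (h z - h s) / (z - s)) * (z + cnj s)"

lemma divh_holo:
  assumes holo: "h holomorphic_on {z. Re z > 0}" and s: "Re s > 0"
  shows "divh h s holomorphic_on {z. Re z > 0}"
proof -
  have "(\<lambda>z. if z = s then deriv h s else (h z - h s) / (z - s)) holomorphic_on {z. Re z > 0}"
    by (rule pole_lemma[OF holo]) (simp add: interior_open[OF openH] s)
  then show ?thesis unfolding divh_def by (intro holomorphic_intros)
qed

lemma divh_eq:
  assumes s: "Re s > 0" and hs: "h s = 0" and z: "Re z > 0"
  shows "h z = bl s z * divh h s z"
proof (cases "z = s")
  case True then show ?thesis using hs by (simp add: bl_def divh_def)
next
  case False
  have "z + cnj s \<noteq> 0" using Re_pos_nz z s by blast
  then show ?thesis using False hs by (simp add: bl_def divh_def)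
qed

lemma divh_bound:
  assumes holo: "h holomorphic_on {z. Re z > 0}"
    and bd: "\<And>z. Re z > 0 \<Longrightarrow> cmod (h z) \<le> 1"
    and s: "Re s > 0" and hs: "h s = 0" and z: "Re z > 0"
  shows "cmod (divh h s z) \<le> 1"
proof -
  have ne: "cmod (divh h s w) \<le> 1" if w: "Re w > 0" "w \<noteq> s" for w
  proof -
    have "bl s w \<noteq> 0" using w Re_pos_nz[OF w(1) s] by (simp add: bl_def)
    moreover have "cmod (h w) \<le> cmod (bl s w)" using schwarz_half[OF holo bd s hs w(1)] .
    moreover have "h w = bl s w * divh h s w" using divh_eq[of s h w] s hs w(1) by blast
    ultimately have "cmod (bl s w) * cmod (divh h s w) \<le> cmod (bl s w) * 1"
      by (simp add: norm_mult)
    moreover have "cmod (bl s w) > 0" using \<open>bl s w \<noteq> 0\<close> by simp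
    ultimately show ?thesis by (simp only: mult_le_cancel_left_pos)
  qed
  show ?thesis
  proof (cases "z = s")
    case False then show ?thesis using ne z by blast
  next
    case True
    have "isCont (divh h s) s"
      using divh_holo[OF holo s] s openH holomorphic_on_imp_continuous_on continuous_on_interior interior_open
      by (metis mem_Collect_eq)
    then have "((\<lambda>w. cmod (divh h s w)) \<longlongrightarrow> cmod (divh h s s)) (at s)"
      by (intro tendsto_intros) (simp add: isCont_def)
    moreover have "eventually (\<lambda>w. cmod (divh h s w) \<le> 1) (at s)"
    proof -
      have "eventually (\<lambda>w. w \<in> {z. Re z > 0}) (at s)"
        using openH s by (intro eventually_at_in_open') auto
      then show ?thesis unfolding eventually_at_filter using ne
        by (auto elim!: eventually_mono)
    qed
    ultimately have "cmod (divh h s s) \<le> 1"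
      by (rule tendsto_upperbound) simp
    then show ?thesis using True by simp
  qed
qed

lemma ball_Re_pos:
  assumes "z \<in> ball s' (Re s')"
  shows "Re z > 0"
proof -
  have "\<bar>Re (s' - z)\<bar> \<le> cmod (s' - z)" by (rule abs_Re_le_cmod)
  then show ?thesis using assms by (simp add: dist_norm)
qed

lemma ordge_other:
  assumes o: "ordge h s' m" and ne: "s' \<noteq> s" and s: "Re s > 0" and s': "Re s' > 0"
    and eq: "\<And>z. Re z > 0 \<Longrightarrow> h z = bl s z * h1 z"
  shows "ordge h1 s' m"
proof -
  obtain r k where r: "r > 0" and k: "k holomorphic_on ball s' r"
    and keq: "\<forall>z\<in>ball s' r - {s'}. h z = (z - s')^m * k z"
    using o unfolding ordge_def by blast
  define r' where "r' = min r (min (dist s' s) (Re s'))"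
  have r'0: "r' > 0" unfolding r'_def using r ne s' by simp
  have sub: "ball s' r' \<subseteq> ball s' r" unfolding r'_def by auto
  have pos: "Re z > 0" if "z \<in> ball s' r'" for z
    using ball_Re_pos[of z s'] that unfolding r'_def by auto
  have zs: "z \<noteq> s" if "z \<in> ball s' r'" for z
    using that unfolding r'_def by (auto simp: dist_commute)
  have bnz: "bl s z \<noteq> 0" if "z \<in> ball s' r'" for z
    using zs[OF that] Re_pos_nz[OF pos[OF that] s] by (simp add: bl_def)
  have "(\<lambda>z. k z / bl s z) holomorphic_on ball s' r'"
    unfolding bl_def
    apply (intro holomorphic_intros holomorphic_on_subset[OF k sub])
    using bnz Re_pos_nz pos s unfolding bl_def by auto
  moreover have "\<forall>z\<in>ball s' r' - {s'}. h1 z = (z - s')^m * (k z / bl s z)"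
  proof
    fix z assume z: "z \<in> ball s' r' - {s'}"
    then have "h z = bl s z * h1 z" using eq pos by blast
    moreover have "h z = (z - s')^m * k z" using keq z sub by blast
    ultimately show "h1 z = (z - s')^m * (k z / bl s z)"
      using bnz z by (simp add: field_simps)
  qed
  ultimately show ?thesis unfolding ordge_def using r'0 by blast
qed

lemma ordge_self:
  assumes o: "ordge h s m" and m: "m > 0" and s: "Re s > 0"
    and eq: "\<And>z. Re z > 0 \<Longrightarrow> h z = bl s z * h1 z"
  shows "ordge h1 s (m - 1)"
proof -
  obtain r k where r: "r > 0" and k: "k holomorphic_on ball s r"
    and keq: "\<forall>z\<in>ball s r - {s}. h z = (z - s)^m * k z"
    using o unfolding ordge_def by blast
  define r' where "r' = min r (Re s)"
  have r'0: "r' > 0" unfolding r'_def using r s by simp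
  have sub: "ball s r' \<subseteq> ball s r" unfolding r'_def by auto
  have pos: "Re z > 0" if "z \<in> ball s r'" for z
    using ball_Re_pos[of z s] that unfolding r'_def by auto
  have "(\<lambda>z. k z * (z + cnj s)) holomorphic_on ball s r'"
    by (intro holomorphic_intros holomorphic_on_subset[OF k sub])
  moreover have "\<forall>z\<in>ball s r' - {s}. h1 z = (z - s)^(m - 1) * (k z * (z + cnj s))"
  proof
    fix z assume z: "z \<in> ball s r' - {s}"
    then have zs: "z - s \<noteq> 0" by auto
    have n: "z + cnj s \<noteq> 0" using Re_pos_nz[OF pos s] z by blast
    have "h z = bl s z * h1 z" using eq pos z by blast
    moreover have "h z = (z - s)^m * k z" using keq z sub by blast
    moreover have "(z - s)^m = (z - s) * (z - s)^(m - 1)"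
      using m by (metis Suc_diff_1 power_Suc)
    ultimately have "(z - s) * (z - s)^(m - 1) * k z = (z - s) / (z + cnj s) * h1 z"
      by (simp add: bl_def)
    then have "(z - s) * ((z - s)^(m - 1) * k z * (z + cnj s)) = (z - s) * h1 z"
      using n by (simp add: field_simps)
    then show "h1 z = (z - s)^(m - 1) * (k z * (z + cnj s))"
      using zs by (simp add: mult.assoc)
  qed
  ultimately show ?thesis unfolding ordge_def using r'0 by blast
qed

lemma ordge_mult:
  assumes o: "ordge F s m" and s: "Re s > 0" and u: "u holomorphic_on {z. Re z > 0}"
    and eq: "\<And>z. Re z > 0 \<Longrightarrow> G z = F z * u z"
  shows "ordge G s m"
proof -
  obtain r k where r: "r > 0" and k: "k holomorphic_on ball s r"
    and keq: "\<forall>z\<in>ball s r - {s}. F z = (z - s)^m * k z"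
    using o unfolding ordge_def by blast
  define r' where "r' = min r (Re s)"
  have r'0: "r' > 0" unfolding r'_def using r s by simp
  have sub: "ball s r' \<subseteq> ball s r" unfolding r'_def by auto
  have pos: "Re z > 0" if "z \<in> ball s r'" for z
    using ball_Re_pos[of z s] that unfolding r'_def by auto
  have sub2: "ball s r' \<subseteq> {z. Re z > 0}" using pos by auto
  have "(\<lambda>z. k z * u z) holomorphic_on ball s r'"
    by (intro holomorphic_intros holomorphic_on_subset[OF k sub] holomorphic_on_subset[OF u sub2])
  moreover have "\<forall>z\<in>ball s r' - {s}. G z = (z - s)^m * (k z * u z)"
    using eq pos keq sub by (auto simp: mult.assoc)
  ultimately show ?thesis unfolding ordge_def using r'0 by blast
qed

lemma blaschke_aux:
  "sum m S = n \<Longrightarrow> finite S \<Longrightarrow> S \<subseteq> {z. Re z > 0} \<Longrightarrow> h holomorphic_on {z. Re z > 0}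
   \<Longrightarrow> (\<forall>z. Re z > 0 \<longrightarrow> cmod (h z) \<le> 1) \<Longrightarrow> (\<forall>s\<in>S. ordge h s (m s)) \<Longrightarrow> Re z > 0
   \<Longrightarrow> cmod (h z) \<le> (\<Prod>s\<in>S. cmod (bl s z) ^ m s)"
proof (induction n arbitrary: h m rule: less_induct)
  case (less n)
  show ?case
  proof (cases "\<exists>s\<in>S. m s > 0")
    case False
    then have "(\<Prod>s\<in>S. cmod (bl s z) ^ m s) = 1" by simp
    then show ?thesis using less.prems by simp
  next
    case True
    then obtain s where sS: "s \<in> S" and ms: "m s > 0" by blast
    have sH: "Re s > 0" using sS less.prems(3) by blast
    have hs: "h s = 0" using ordge_zero[OF less.prems(4) sH] less.prems(6) sS ms by blast
    define h1 where "h1 = divh h s"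
    define m' where "m' = m(s := m s - 1)"
    have bd: "\<And>w. Re w > 0 \<Longrightarrow> cmod (h w) \<le> 1" using less.prems(5) by blast
    have h1holo: "h1 holomorphic_on {z. Re z > 0}" unfolding h1_def
      using divh_holo[OF less.prems(4) sH] .
    have h1bd: "\<forall>w. Re w > 0 \<longrightarrow> cmod (h1 w) \<le> 1" unfolding h1_def
      using divh_bound[OF less.prems(4) bd sH hs] by blast
    have heq: "\<And>w. Re w > 0 \<Longrightarrow> h w = bl s w * h1 w" unfolding h1_def
      using divh_eq[of s h] sH hs by blast
    have ord1: "\<forall>s'\<in>S. ordge h1 s' (m' s')"
    proof
      fix s' assume s': "s' \<in> S"
      show "ordge h1 s' (m' s')"
      proof (cases "s' = s")
        case True
        then show ?thesis unfolding m'_def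
          using ordge_self[OF _ ms sH heq] less.prems(6) sS by simp
      next
        case False
        have "Re s' > 0" using s' less.prems(3) by blast
        then show ?thesis unfolding m'_def
          using ordge_other[OF _ False sH _ heq] less.prems(6) s' False by simp
      qed
    qed
    have sum1: "sum m S = m s + sum m (S - {s})"
      using less.prems(2) sS by (simp add: sum.remove)
    have sum2: "sum m' S = m' s + sum m' (S - {s})"
      using less.prems(2) sS by (simp add: sum.remove)
    have sum3: "sum m' (S - {s}) = sum m (S - {s})"
      unfolding m'_def by (rule sum.cong) auto
    have lt: "sum m' S < n" using sum1 sum2 sum3 ms less.prems(1) unfolding m'_def by simp
    have IH: "cmod (h1 z) \<le> (\<Prod>s\<in>S. cmod (bl s z) ^ m' s)"
      using less.IH[OF lt refl less.prems(2,3) h1holo h1bd ord1 less.prems(7)] .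
    have p1: "(\<Prod>s\<in>S. cmod (bl s z) ^ m s) = cmod (bl s z) ^ m s * (\<Prod>s\<in>S - {s}. cmod (bl s z) ^ m s)"
      using less.prems(2) sS by (simp add: prod.remove)
    have p2: "(\<Prod>s\<in>S. cmod (bl s z) ^ m' s) = cmod (bl s z) ^ m' s * (\<Prod>s\<in>S - {s}. cmod (bl s z) ^ m' s)"
      using less.prems(2) sS by (simp add: prod.remove)
    have p3: "(\<Prod>s\<in>S - {s}. cmod (bl s z) ^ m' s) = (\<Prod>s\<in>S - {s}. cmod (bl s z) ^ m s)"
      unfolding m'_def by (rule prod.cong) auto
    have p4: "cmod (bl s z) * cmod (bl s z) ^ m' s = cmod (bl s z) ^ m s"
      unfolding m'_def using ms by (simp add: power_Suc[symmetric])
    have "cmod (h z) = cmod (bl s z) * cmod (h1 z)" using heq[OF less.prems(7)] by (simp add: norm_mult)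
    also have "\<dots> \<le> cmod (bl s z) * (\<Prod>s\<in>S. cmod (bl s z) ^ m' s)"
      using IH by (simp add: mult_left_mono)
    also have "\<dots> = (\<Prod>s\<in>S. cmod (bl s z) ^ m s)"
      unfolding p1 p2 p3 using p4 by (simp add: mult.assoc[symmetric])
    finally show ?thesis .
  qed
qed

lemma norm_term:
  "cmod (a (Suc n) * of_nat (Suc n) powr (- z)) = cmod (a (Suc n)) * real (Suc n) powr (- Re z)"
proof -
  have "cmod (of_nat (Suc n) powr (- z)) = Re (of_nat (Suc n)) powr Re (- z)"
    by (rule norm_powr_real_powr) auto
  then show ?thesis by (simp add: norm_mult)
qed

lemma dir_tail:
  assumes "\<exists>\<kappa>>0. \<forall>s\<in>halfplane \<kappa>. (\<lambda>n. a (Suc n) * of_nat (Suc n) powr (- s)) sums f s"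
  shows "\<forall>\<epsilon>>0. \<exists>\<sigma>0>0. \<forall>z. Re z \<ge> \<sigma>0 \<longrightarrow>
     cmod (f z - (\<Sum>n\<le>N. a (Suc n) * of_nat (Suc n) powr (- z))) \<le> \<epsilon> * real (Suc N) powr (- Re z)"
proof (intro allI impI)
  fix \<epsilon> :: real assume ep: "\<epsilon> > 0"
  obtain \<kappa> where k0: "\<kappa> > 0" and ks: "\<forall>s\<in>halfplane \<kappa>. (\<lambda>n. a (Suc n) * of_nat (Suc n) powr (- s)) sums f s"
    using assms by blast
  define s0 where "s0 = complex_of_real (\<kappa> + 1)"
  have "s0 \<in> halfplane \<kappa>" unfolding s0_def halfplane_def by simp
  then have "summable (\<lambda>n. a (Suc n) * of_nat (Suc n) powr (- s0))" using ks sums_summable by blast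
  then have "Bseq (\<lambda>n. a (Suc n) * of_nat (Suc n) powr (- s0))"
    using summable_LIMSEQ_zero convergent_imp_Bseq convergentI by blast
  then obtain M where M0: "M > 0" and M: "\<forall>n. cmod (a (Suc n) * of_nat (Suc n) powr (- s0)) \<le> M"
    by (rule BseqE)
  have aM: "cmod (a (Suc n)) \<le> M * real (Suc n) powr (\<kappa> + 1)" for n
  proof -
    have "cmod (a (Suc n)) * real (Suc n) powr (- (\<kappa> + 1)) \<le> M"
      using spec[OF M, of n] norm_term[of a n s0] unfolding s0_def by (simp del: of_nat_Suc)
    then have "cmod (a (Suc n)) * real (Suc n) powr (- (\<kappa> + 1)) * real (Suc n) powr (\<kappa> + 1)
        \<le> M * real (Suc n) powr (\<kappa> + 1)"
      by (simp add: mult_right_mono)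
    then show ?thesis by (simp add: mult.assoc powr_add[symmetric])
  qed
  define g where "g n = real (n + 2) powr (-2)" for n
  have gs: "summable g"
  proof -
    have "summable (\<lambda>n. real n powr (-2))" using summable_real_powr_iff by simp
    from summable_ignore_initial_segment[OF this, of 2] show ?thesis
      unfolding g_def by simp
  qed
  define C where "C = suminf g"
  have C0: "C \<ge> 0" unfolding C_def using gs by (intro suminf_nonneg) (auto simp: g_def)
  define K where "K = M * real (Suc N) powr (\<kappa> + 3)"
  have K0: "K > 0" unfolding K_def using M0 by simp
  define D where "D = K * C + 1"
  have D0: "D > 0" unfolding D_def using K0 C0
    by (metis add_nonneg_pos less_eq_real_def mult_nonneg_nonneg zero_less_one)
  define r where "r = real (Suc N) / real (N + 2)"
  have r0: "r > 0" "r < 1" unfolding r_def by auto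
  have lr: "ln r < 0" using r0 by simp
  define p0 where "p0 = max 0 (ln (\<epsilon> / D) / ln r)"
  define \<sigma>0 where "\<sigma>0 = \<kappa> + 3 + p0"
  have "\<sigma>0 > 0" unfolding \<sigma>0_def p0_def using k0 by simp
  moreover have "cmod (f z - (\<Sum>n\<le>N. a (Suc n) * of_nat (Suc n) powr (- z))) \<le> \<epsilon> * real (Suc N) powr (- Re z)"
    if z: "Re z \<ge> \<sigma>0" for z
  proof -
    define p where "p = Re z - \<kappa> - 3"
    have pp: "p \<ge> p0" "p \<ge> 0" using z unfolding p_def \<sigma>0_def p0_def by auto
    have "z \<in> halfplane \<kappa>" unfolding halfplane_def using z pp unfolding p_def by simp
    then have "(\<lambda>n. a (Suc n) * of_nat (Suc n) powr (- z)) sums f z" using ks by blast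
    then have sm: "(\<lambda>i. a (Suc (i + Suc N)) * of_nat (Suc (i + Suc N)) powr (- z)) sums
        (f z - (\<Sum>n\<le>N. a (Suc n) * of_nat (Suc n) powr (- z)))"
      by (subst sums_iff_shift) (simp add: lessThan_Suc_atMost)
    have bnd: "cmod (a (Suc (i + Suc N)) * of_nat (Suc (i + Suc N)) powr (- z))
        \<le> K * r powr p * real (Suc N) powr (- Re z) * g i" for i
    proof -
      define x where "x = real (Suc (i + Suc N))"
      have x2: "x \<ge> real (N + 2)" "x > 0" unfolding x_def by auto
      have e: "cmod (a (Suc (i + Suc N)) * of_nat (Suc (i + Suc N)) powr (- z))
          = cmod (a (Suc (i + Suc N))) * x powr (- Re z)" unfolding x_def by (rule norm_term)
      have "cmod (a (Suc (i + Suc N))) * x powr (- Re z)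
          \<le> M * x powr (\<kappa> + 1) * x powr (- Re z)"
        using aM[of "i + Suc N"] unfolding x_def by (simp add: mult_right_mono)
      also have "\<dots> = M * (x powr (- p) * x powr (-2))"
        by (simp add: mult.assoc powr_add[symmetric] p_def algebra_simps)
      also have "\<dots> \<le> M * (real (N + 2) powr (- p) * g i)"
      proof -
        have "x powr (- p) \<le> real (N + 2) powr (- p)"
          using pp x2 by (intro powr_mono2') auto
        moreover have "x powr (-2) \<le> g i"
          unfolding g_def using x2 by (intro powr_mono2') (auto simp: x_def)
        ultimately show ?thesis using M0
          by (intro mult_left_mono mult_mono) auto
      qed
      also have "real (N + 2) powr (- p) = r powr p * real (Suc N) powr (- p)"
        unfolding r_def by (simp add: powr_divide powr_minus field_simps)
      also have "real (Suc N) powr (- p) = real (Suc N) powr (\<kappa> + 3) * real (Suc N) powr (- Re z)"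
        by (simp add: powr_add[symmetric] p_def algebra_simps)
      finally show ?thesis using e unfolding K_def by (simp add: mult_ac)
    qed
    have "cmod (f z - (\<Sum>n\<le>N. a (Suc n) * of_nat (Suc n) powr (- z)))
        \<le> (\<Sum>i. K * r powr p * real (Suc N) powr (- Re z) * g i)"
      using norm_suminf_le[OF bnd summable_mult[OF gs]] sums_unique[OF sm] by simp
    also have "\<dots> = (K * C * r powr p) * real (Suc N) powr (- Re z)"
      unfolding C_def using suminf_mult[OF gs, of "K * r powr p * real (Suc N) powr (- Re z)"]
      by (simp add: mult_ac)
    also have "\<dots> \<le> \<epsilon> * real (Suc N) powr (- Re z)"
    proof (rule mult_right_mono)
      have "p * ln r \<le> p0 * ln r" using pp lr by (intro mult_right_mono_neg) auto
      also have "p0 * ln r \<le> (ln (\<epsilon> / D) / ln r) * ln r"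
        using lr unfolding p0_def by (intro mult_right_mono_neg) auto
      also have "\<dots> = ln (\<epsilon> / D)" using lr by simp
      finally have "exp (p * ln r) \<le> exp (ln (\<epsilon> / D))" by simp
      then have "r powr p \<le> \<epsilon> / D" using r0 ep D0 by (simp add: powr_def)
      then have "K * C * r powr p \<le> K * C * (\<epsilon> / D)"
        using K0 C0 by (intro mult_left_mono) auto
      also have "\<dots> \<le> \<epsilon>" using D0 ep K0 C0 unfolding D_def by (simp add: field_simps)
      finally show "K * C * r powr p \<le> \<epsilon>" .
    qed simp
    finally show ?thesis .
  qed
  ultimately show "\<exists>\<sigma>0>0. \<forall>z. Re z \<ge> \<sigma>0 \<longrightarrow>
     cmod (f z - (\<Sum>n\<le>N. a (Suc n) * of_nat (Suc n) powr (- z))) \<le> \<epsilon> * real (Suc N) powr (- Re z)"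
    by blast
qed

lemma dir_unif:
  assumes "\<exists>\<kappa>>0. \<forall>s\<in>halfplane \<kappa>. (\<lambda>n. a (Suc n) * of_nat (Suc n) powr (- s)) sums f s"
  shows "\<forall>\<epsilon>>0. \<exists>\<sigma>0>0. \<forall>z. Re z \<ge> \<sigma>0 \<longrightarrow> cmod (f z - a 1) \<le> \<epsilon>"
  using dir_tail[OF assms, of 0] by simp

lemma nat_powr_polar:
  assumes "N > 0"
  shows "(of_nat N :: complex) powr (- Complex \<sigma> t) =
         complex_of_real (real N powr (- \<sigma>)) * cis (- (t * ln (real N)))"
proof -
  have "(of_nat N :: complex) powr (- Complex \<sigma> t) = exp (- Complex \<sigma> t * of_real (ln (real N)))"
    using assms by (simp add: powr_def)
  also have "\<dots> = exp (Re (- Complex \<sigma> t * of_real (ln (real N)))) * cis (Im (- Complex \<sigma> t * of_real (ln (real N))))"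
    by (rule exp_eq_polar)
  also have "\<dots> = complex_of_real (real N powr (- \<sigma>)) * cis (- (t * ln (real N)))"
    using assms by (simp add: powr_def)
  finally show ?thesis .
qed

lemma a1_lt1:
  assumes "dirichlet_C0_to_D f a"
  shows "cmod (a 1) < 1"
proof (rule ccontr)
  assume "\<not> cmod (a 1) < 1"
  then have a1: "cmod (a 1) \<ge> 1" by simp
  have fin: "\<forall>s\<in>halfplane 0. f s \<in> ball 0 1"
    and dir: "\<exists>\<kappa>>0. \<forall>s\<in>halfplane \<kappa>. (\<lambda>n. a (Suc n) * of_nat (Suc n) powr (- s)) sums f s"
    using assms unfolding dirichlet_C0_to_D_def by blast+
  show False
  proof (cases "\<exists>n\<ge>1. a (Suc n) \<noteq> 0")
    case False
    obtain \<kappa> where k0: "\<kappa> > 0" and ks: "\<forall>s\<in>halfplane \<kappa>. (\<lambda>n. a (Suc n) * of_nat (Suc n) powr (- s)) sums f s"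
      using dir by blast
    define z where "z = complex_of_real (\<kappa> + 1)"
    have "z \<in> halfplane \<kappa>" unfolding z_def halfplane_def by simp
    then have s1: "(\<lambda>n. a (Suc n) * of_nat (Suc n) powr (- z)) sums f z" using ks by blast
    have "(\<lambda>n. a (Suc n) * of_nat (Suc n) powr (- z)) = (\<lambda>n. if n = 0 then a 1 else 0)"
      using False by (auto simp: fun_eq_iff)
    then have "(\<lambda>n. a (Suc n) * of_nat (Suc n) powr (- z)) sums a 1"
      using sums_single[of 0 "\<lambda>_. a 1"] by simp
    then have "f z = a 1" using s1 sums_unique2 by blast
    moreover have "z \<in> halfplane 0" unfolding z_def halfplane_def using k0 by simp
    ultimately show False using fin a1 by auto
  next
    case True
    define N where "N = (LEAST n. n \<ge> 1 \<and> a (Suc n) \<noteq> 0)"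
    have N: "N \<ge> 1" "a (Suc N) \<noteq> 0"
      using LeastI_ex[OF True[unfolded Bex_def]] unfolding N_def by auto
    have Nmin: "a (Suc n) = 0" if "1 \<le> n" "n < N" for n
      using not_less_Least[of n "\<lambda>n. n \<ge> 1 \<and> a (Suc n) \<noteq> 0"] that unfolding N_def by auto
    define A where "A = a (Suc N)"
    have A0: "cmod A > 0" using N unfolding A_def by simp
    obtain \<sigma> where s0: "\<sigma> > 0" and sb: "\<forall>z. Re z \<ge> \<sigma> \<longrightarrow>
        cmod (f z - (\<Sum>n\<le>N. a (Suc n) * of_nat (Suc n) powr (- z))) \<le> (cmod A / 2) * real (Suc N) powr (- Re z)"
      using dir_tail[OF dir, of N] A0 by (metis half_gt_zero)
    define L where "L = ln (real (Suc N))"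
    have L0: "L > 0" unfolding L_def using N by simp
    define w where "w = cnj (a 1) * A"
    have w0: "w \<noteq> 0" unfolding w_def using a1 A0 by auto
    define t where "t = Arg w / L"
    define z where "z = Complex \<sigma> t"
    define P where "P = real (Suc N) powr (- \<sigma>)"
    have P0: "P > 0" unfolding P_def by simp
    have sumeq: "(\<Sum>n\<le>N. a (Suc n) * of_nat (Suc n) powr (- z)) = a 1 + A * of_nat (Suc N) powr (- z)"
    proof -
      have "(\<Sum>n\<le>N. a (Suc n) * of_nat (Suc n) powr (- z))
          = (\<Sum>n<N. a (Suc n) * of_nat (Suc n) powr (- z)) + A * of_nat (Suc N) powr (- z)"
        unfolding A_def by (simp add: lessThan_Suc_atMost[symmetric])
      moreover have "(\<Sum>n<N. a (Suc n) * of_nat (Suc n) powr (- z)) = (\<Sum>n<N. if n = 0 then a 1 else 0)"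
        using Nmin by (intro sum.cong) auto
      moreover have "(\<Sum>n<N. if n = 0 then a 1 else 0) = a 1" using N by simp
      ultimately show ?thesis by simp
    qed
    have pz: "of_nat (Suc N) powr (- z) = complex_of_real P * cis (- Arg w)"
      unfolding z_def P_def using nat_powr_polar[of "Suc N" \<sigma> t] L0 unfolding t_def L_def by simp
    have wc: "w * cis (- Arg w) = complex_of_real (cmod w)"
    proof -
      have "w = complex_of_real (cmod w) * cis (Arg w)" using rcis_cmod_Arg[of w] by (simp add: rcis_def)
      then have "w * cis (- Arg w) = complex_of_real (cmod w) * (cis (Arg w) * cis (- Arg w))"
        by (metis mult.assoc)
      also have "\<dots> = complex_of_real (cmod w)" by (simp add: cis_mult)
      finally show ?thesis .
    qed
    have ct: "cnj (a 1) * (A * of_nat (Suc N) powr (- z)) = complex_of_real (cmod w * P)"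
      unfolding pz using wc unfolding w_def by (simp add: mult_ac)
    define E where "E = f z - (a 1 + A * of_nat (Suc N) powr (- z))"
    have Eb: "cmod E \<le> (cmod A / 2) * P"
      using sb[rule_format, of z] sumeq unfolding E_def P_def z_def by simp
    have fz: "cnj (a 1) * f z = complex_of_real ((cmod (a 1))^2 + cmod w * P) + cnj (a 1) * E"
    proof -
      have sq: "a 1 * cnj (a 1) = complex_of_real ((cmod (a 1))^2)" by (rule complex_norm_square[symmetric])
      have "f z = a 1 + A * of_nat (Suc N) powr (- z) + E" by (simp add: E_def)
      then have "cnj (a 1) * f z = a 1 * cnj (a 1) + cnj (a 1) * (A * of_nat (Suc N) powr (- z)) + cnj (a 1) * E"
        by (simp add: algebra_simps)
      also have "\<dots> = complex_of_real ((cmod (a 1))^2) + complex_of_real (cmod w * P) + cnj (a 1) * E"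
        unfolding sq ct ..
      finally show ?thesis by simp
    qed
    have "Re (cnj (a 1) * E) \<ge> - (cmod (a 1) * ((cmod A / 2) * P))"
    proof -
      have "\<bar>Re (cnj (a 1) * E)\<bar> \<le> cmod (cnj (a 1) * E)" by (rule abs_Re_le_cmod)
      also have "\<dots> \<le> cmod (a 1) * ((cmod A / 2) * P)" using mult_left_mono[OF Eb, of "cmod (a 1)"] by (simp add: norm_mult)
      finally show ?thesis by linarith
    qed
    then have "Re (cnj (a 1) * f z) \<ge> cmod (a 1) * (cmod (a 1) + cmod A / 2 * P)"
      unfolding fz w_def by (simp add: norm_mult algebra_simps power2_eq_square)
    moreover have "Re (cnj (a 1) * f z) \<le> cmod (a 1) * cmod (f z)"
      using complex_Re_le_cmod[of "cnj (a 1) * f z"] by (simp add: norm_mult)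
    ultimately have "cmod (a 1) * (cmod (a 1) + cmod A / 2 * P) \<le> cmod (a 1) * cmod (f z)"
      by linarith
    then have "cmod (a 1) + cmod A / 2 * P \<le> cmod (f z)"
    proof -
      have pos: "cmod (a 1) > 0" using a1 by linarith
      show ?thesis using \<open>cmod (a 1) * (cmod (a 1) + cmod A / 2 * P) \<le> cmod (a 1) * cmod (f z)\<close>
        by (subst (asm) mult_le_cancel_left_pos[OF pos])
    qed
    moreover have "cmod A / 2 * P > 0" using A0 P0 by simp
    moreover have "z \<in> halfplane 0" unfolding z_def halfplane_def using s0 by simp
    ultimately show False using fin a1 by fastforce
  qed
qed

definition wk :: "real \<Rightarrow> complex \<Rightarrow> real \<Rightarrow> real" where
  "wk \<sigma> s t = 4 * \<sigma> * Re s / ((\<sigma> + Re s)^2 + (t - Im s)^2)"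

lemma core1:
  assumes holo: "G holomorphic_on {z. Re z > 0}"
    and bd: "\<forall>z. Re z > 0 \<longrightarrow> cmod (G z) \<le> 1"
    and F: "finite F" "F \<subseteq> {z. Re z > 0}" "\<forall>s\<in>F. ordge G s (m s)"
    and sig: "\<sigma> > 0" and c: "c' > 0" "cmod (G (Complex \<sigma> t)) \<ge> c'"
  shows "(\<Sum>s\<in>F. real (m s) * wk \<sigma> s t) \<le> 2 * (- ln c')"
proof -
  define z where "z = Complex \<sigma> t"
  have z: "Re z > 0" unfolding z_def using sig by simp
  have B: "cmod (G z) \<le> (\<Prod>s\<in>F. cmod (bl s z) ^ m s)"
    using blaschke_aux[OF refl F(1,2) holo bd F(3) z] .
  have sq: "(cmod (bl s z))^2 = 1 - wk \<sigma> s t" if "s \<in> F" for s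
    using bl_norm_sq[OF z, of s] that F(2) unfolding wk_def z_def by auto
  have "(cmod (G z))^2 \<le> (\<Prod>s\<in>F. cmod (bl s z) ^ m s)^2"
    using B by (simp add: power_mono)
  also have "\<dots> = (\<Prod>s\<in>F. (cmod (bl s z) ^ m s)^2)"
    by (rule prod_power_distrib)
  also have "\<dots> = (\<Prod>s\<in>F. ((cmod (bl s z))^2) ^ m s)"
    by (intro prod.cong refl) (metis power_mult mult.commute)
  also have "\<dots> = (\<Prod>s\<in>F. (1 - wk \<sigma> s t) ^ m s)"
    using sq by (intro prod.cong) auto
  also have "\<dots> \<le> (\<Prod>s\<in>F. exp (- wk \<sigma> s t) ^ m s)"
  proof (rule prod_mono)
    fix s assume s: "s \<in> F"
    have "0 \<le> 1 - wk \<sigma> s t" using sq[OF s] by (metis zero_le_power2)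
    moreover have "1 - wk \<sigma> s t \<le> exp (- wk \<sigma> s t)"
      using exp_ge_add_one_self[of "- wk \<sigma> s t"] by simp
    ultimately show "0 \<le> (1 - wk \<sigma> s t) ^ m s \<and> (1 - wk \<sigma> s t) ^ m s \<le> exp (- wk \<sigma> s t) ^ m s"
      by (simp add: power_mono)
  qed
  also have "\<dots> = exp (- (\<Sum>s\<in>F. real (m s) * wk \<sigma> s t))"
    using F(1) by (simp add: exp_sum[symmetric] exp_of_nat_mult[symmetric] sum_negf mult.commute)
  finally have le: "(cmod (G z))^2 \<le> exp (- (\<Sum>s\<in>F. real (m s) * wk \<sigma> s t))" .
  have "c'^2 \<le> (cmod (G z))^2" using c unfolding z_def by (simp add: power_mono)
  then have "c'^2 \<le> exp (- (\<Sum>s\<in>F. real (m s) * wk \<sigma> s t))" using le by linarith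
  then have "ln (c'^2) \<le> - (\<Sum>s\<in>F. real (m s) * wk \<sigma> s t)"
    using c by (metis ln_exp ln_le_cancel_iff exp_gt_zero zero_less_power)
  then show ?thesis using c by (simp add: ln_realpow)
qed

lemma deriv_term:
  assumes e: "e > 0"
  shows "((\<lambda>t. c * (A * arctan ((t - y) / e))) has_real_derivative c * (A * (e / (e^2 + (t - y)^2)))) (at t)"
proof -
  have "((\<lambda>t. c * (A * arctan ((t - y) / e))) has_real_derivative
      c * (A * (inverse (1 + ((t - y) / e)^2) * (1 / e)))) (at t)"
    using e by (auto intro!: derivative_eq_intros)
  moreover have eq: "inverse (1 + ((t - y) / e)^2) * (1 / e) = e / (e^2 + (t - y)^2)"
    using e by (simp add: field_simps power2_eq_square)
  ultimately show ?thesis by (simp only: eq)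
qed

lemma core2:
  assumes F: "finite F" and Fp: "\<forall>s\<in>F. 0 < Re s \<and> Re s < \<sigma>1 \<and> \<bar>Im s\<bar> < T"
    and sig: "\<sigma> \<ge> \<sigma>1" "\<sigma>1 > 0" and R: "R > 0" and T: "T > 0"
    and pt: "\<And>t. (\<Sum>s\<in>F. real (m s) * wk \<sigma> s t) \<le> 2 * Lq"
  shows "(\<Sum>s\<in>F. real (m s) * Re s) \<le> Lq * (T + R) * (\<sigma> + \<sigma>1) / (2 * \<sigma> * arctan (R / (2 * \<sigma>)))"
proof -
  define e where "e s = \<sigma> + Re s" for s
  define A where "A s = 4 * \<sigma> * Re s / e s" for s
  have e0: "e s > 0" if "s \<in> F" for s using Fp that sig unfolding e_def by force
  define \<Phi> where "\<Phi> t = (\<Sum>s\<in>F. real (m s) * (A s * arctan ((t - Im s) / e s))) - 2 * Lq * t" for t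
  have D: "(\<Phi> has_real_derivative (\<Sum>s\<in>F. real (m s) * wk \<sigma> s t) - 2 * Lq) (at t)" for t
  proof -
    have "((\<lambda>t. \<Sum>s\<in>F. real (m s) * (A s * arctan ((t - Im s) / e s))) has_real_derivative
        (\<Sum>s\<in>F. real (m s) * wk \<sigma> s t)) (at t)"
    proof (rule DERIV_sum)
      fix s assume s: "s \<in> F"
      have "A s * (e s / ((e s)^2 + (t - Im s)^2)) = wk \<sigma> s t"
        unfolding A_def wk_def e_def using e0[OF s] unfolding e_def by simp
      then show "((\<lambda>t. real (m s) * (A s * arctan ((t - Im s) / e s))) has_real_derivative
          real (m s) * wk \<sigma> s t) (at t)"
        using deriv_term[OF e0[OF s], of "real (m s)" "A s" "Im s" t] by simp
    qed
    moreover have "((\<lambda>t. 2 * Lq * t) has_real_derivative 2 * Lq) (at t)"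
      by (auto intro!: derivative_eq_intros)
    ultimately have "((\<lambda>t. (\<Sum>s\<in>F. real (m s) * (A s * arctan ((t - Im s) / e s))) - 2 * Lq * t)
        has_real_derivative (\<Sum>s\<in>F. real (m s) * wk \<sigma> s t) - 2 * Lq) (at t)"
      by (rule DERIV_diff)
    moreover have "\<Phi> = (\<lambda>t. (\<Sum>s\<in>F. real (m s) * (A s * arctan ((t - Im s) / e s))) - 2 * Lq * t)"
      by (simp add: fun_eq_iff \<Phi>_def)
    ultimately show ?thesis by simp
  qed
  have "\<Phi> (T + R) \<le> \<Phi> (- (T + R))"
  proof (rule DERIV_nonpos_imp_nonincreasing[of "-(T+R)" "T+R" \<Phi>])
    show "- (T + R) \<le> T + R" using T R by simp
    fix x show "\<exists>y. (\<Phi> has_real_derivative y) (at x) \<and> y \<le> 0"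
      using D[of x] pt[of x] by (intro exI[of _ "(\<Sum>s\<in>F. real (m s) * wk \<sigma> s x) - 2 * Lq"]) simp
  qed
  then have m0: "(\<Sum>s\<in>F. real (m s) * (A s * arctan ((T + R - Im s) / e s))) - 2 * Lq * (T + R)
      \<le> (\<Sum>s\<in>F. real (m s) * (A s * arctan ((- (T + R) - Im s) / e s))) - 2 * Lq * (- (T + R))"
    unfolding \<Phi>_def by simp
  have neg: "arctan ((- (T + R) - Im s) / e s) = - arctan ((T + R + Im s) / e s)" for s
  proof -
    have "(- (T + R) - Im s) / e s = - ((T + R + Im s) / e s)" by (simp add: minus_divide_left)
    then show ?thesis by (simp add: arctan_minus)
  qed
  have s2: "(\<Sum>s\<in>F. real (m s) * (A s * arctan ((- (T + R) - Im s) / e s)))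
      = - (\<Sum>s\<in>F. real (m s) * (A s * arctan ((T + R + Im s) / e s)))"
    unfolding neg by (simp add: sum_negf[symmetric])
  have s3: "(\<Sum>s\<in>F. real (m s) * (A s * (arctan ((T + R - Im s) / e s) + arctan ((T + R + Im s) / e s))))
      = (\<Sum>s\<in>F. real (m s) * (A s * arctan ((T + R - Im s) / e s)))
        + (\<Sum>s\<in>F. real (m s) * (A s * arctan ((T + R + Im s) / e s)))"
    by (simp add: sum.distrib[symmetric] distrib_left)
  have main: "(\<Sum>s\<in>F. real (m s) * (A s * (arctan ((T + R - Im s) / e s) + arctan ((T + R + Im s) / e s))))
      \<le> 4 * Lq * (T + R)"
    using m0 unfolding s2 s3 by linarith
  define \<alpha> where "\<alpha> = arctan (R / (2 * \<sigma>))"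
  have \<alpha>0: "\<alpha> > 0" unfolding \<alpha>_def using R sig by simp
  define Q where "Q = 8 * \<sigma> * \<alpha> / (\<sigma> + \<sigma>1)"
  have Q0: "Q > 0" unfolding Q_def using \<alpha>0 sig by simp
  have trm: "Q * (real (m s) * Re s) \<le> real (m s) * (A s * (arctan ((T + R - Im s) / e s) + arctan ((T + R + Im s) / e s)))"
    if s: "s \<in> F" for s
  proof -
    have x: "0 < Re s" "Re s < \<sigma>1" "\<bar>Im s\<bar> < T" using Fp s by auto
    have ee: "e s \<le> 2 * \<sigma>" "e s \<le> \<sigma> + \<sigma>1" "e s > 0" using x sig e0[OF s] unfolding e_def by auto
    have r1: "R / (2 * \<sigma>) \<le> (T + R - Im s) / e s"
    proof -
      have "R / (2 * \<sigma>) \<le> R / e s" using ee R by (intro divide_left_mono) auto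
      also have "\<dots> \<le> (T + R - Im s) / e s" using x ee by (intro divide_right_mono) auto
      finally show ?thesis .
    qed
    have r2: "R / (2 * \<sigma>) \<le> (T + R + Im s) / e s"
    proof -
      have "R / (2 * \<sigma>) \<le> R / e s" using ee R by (intro divide_left_mono) auto
      also have "\<dots> \<le> (T + R + Im s) / e s" using x ee by (intro divide_right_mono) auto
      finally show ?thesis .
    qed
    have at: "2 * \<alpha> \<le> arctan ((T + R - Im s) / e s) + arctan ((T + R + Im s) / e s)"
      using arctan_monotone'[OF r1] arctan_monotone'[OF r2] unfolding \<alpha>_def by simp
    have Ab: "4 * \<sigma> * Re s / (\<sigma> + \<sigma>1) \<le> A s"
      unfolding A_def using ee x sig by (intro divide_left_mono) auto
    have "Q * Re s = (4 * \<sigma> * Re s / (\<sigma> + \<sigma>1)) * (2 * \<alpha>)"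
      unfolding Q_def by (simp add: field_simps)
    also have "\<dots> \<le> A s * (arctan ((T + R - Im s) / e s) + arctan ((T + R + Im s) / e s))"
    proof -
      have "0 \<le> 4 * \<sigma> * Re s / (\<sigma> + \<sigma>1)" using x sig by simp
      then show ?thesis using Ab at \<alpha>0 by (intro mult_mono) auto
    qed
    finally have "Q * Re s \<le> A s * (arctan ((T + R - Im s) / e s) + arctan ((T + R + Im s) / e s))" .
    then show ?thesis by (metis mult.left_commute mult_left_mono of_nat_0_le_iff)
  qed
  have "Q * (\<Sum>s\<in>F. real (m s) * Re s) \<le> 4 * Lq * (T + R)"
  proof -
    have "(\<Sum>s\<in>F. Q * (real (m s) * Re s)) \<le> (\<Sum>s\<in>F. real (m s) * (A s * (arctan ((T + R - Im s) / e s) + arctan ((T + R + Im s) / e s))))"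
      by (rule sum_mono) (rule trm)
    then show ?thesis using main by (simp add: sum_distrib_left)
  qed
  then have "(\<Sum>s\<in>F. real (m s) * Re s) \<le> 4 * Lq * (T + R) / Q"
    using Q0 by (simp add: field_simps)
  also have "\<dots> = Lq * (T + R) * (\<sigma> + \<sigma>1) / (2 * \<sigma> * arctan (R / (2 * \<sigma>)))"
    unfolding Q_def \<alpha>_def using \<alpha>0 sig unfolding \<alpha>_def by (simp add: field_simps)
  finally show ?thesis .
qed

lemma arctan_lb:
  assumes "y > 0"
  shows "arctan y \<ge> pi / 2 - 1 / y"
proof -
  have "arctan (inverse y) = pi / 2 - arctan y" using assms by (rule arctan_inverse)
  then have "arctan y = pi / 2 - arctan (1 / y)" by (simp add: inverse_eq_divide)
  moreover have "arctan (1 / y) \<le> 1 / y" using assms by (intro arctan_le_self) auto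
  ultimately show ?thesis by (simp add: inverse_eq_divide)
qed

lemma final_arith:
  fixes L \<delta> \<sigma>1 T :: real
  assumes L: "L \<ge> 0" and d: "\<delta> > 0" and s1: "\<sigma>1 > 0"
    and eta: "\<eta> = min 1 (\<delta> / (14 * L + 7 * \<delta>))"
    and sig: "\<sigma> = \<sigma>1 / \<eta>" and R: "R = 2 * \<sigma> * (1 + \<eta>) / \<eta>"
    and T: "T \<ge> R / \<eta>" "T > 0"
  shows "pi / T * ((L + \<delta> / 2) * (T + R) * (\<sigma> + \<sigma>1) / (2 * \<sigma> * arctan (R / (2 * \<sigma>)))) \<le> L + \<delta>"
proof -
  have e0: "\<eta> > 0" "\<eta> \<le> 1" using eta L d by auto
  have e1: "\<eta> * (14 * L + 7 * \<delta>) \<le> \<delta>"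
  proof (cases "\<delta> / (14 * L + 7 * \<delta>) \<le> 1")
    case True
    then have "\<eta> = \<delta> / (14 * L + 7 * \<delta>)" using eta by simp
    then show ?thesis using L d by simp
  next
    case False
    then have "\<eta> = 1" using eta by simp
    moreover have "14 * L + 7 * \<delta> < \<delta>" using False L d by (simp add: field_simps)
    ultimately show ?thesis by simp
  qed
  have sg: "\<sigma> > 0" using sig s1 e0 by simp
  have s1eq: "\<sigma>1 = \<eta> * \<sigma>" using sig e0 by simp
  define y where "y = R / (2 * \<sigma>)"
  have y: "y = (1 + \<eta>) / \<eta>" unfolding y_def R using sg by simp
  have y0: "y > 0" using y e0 by simp
  have R0: "R > 0" using R sg e0 by simp
  have at: "arctan y \<ge> pi / 2 - \<eta> / (1 + \<eta>)" using arctan_lb[OF y0] y by simp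
  have "pi / 2 \<le> (1 + \<eta>) * (pi / 2 - \<eta> / (1 + \<eta>))"
  proof -
    have "(1 + \<eta>) * (pi / 2 - \<eta> / (1 + \<eta>)) = pi / 2 + \<eta> * (pi / 2 - 1)"
      using e0 by (simp add: field_simps)
    moreover have "pi / 2 - 1 \<ge> 0" using pi_gt3 by simp
    ultimately show ?thesis using e0 by simp
  qed
  then have f3: "pi / 2 \<le> (1 + \<eta>) * arctan y"
    using at e0 by (smt (verit) mult_left_mono)
  have ay0: "arctan y > 0" using y0 by simp
  have f3': "pi / (2 * arctan y) \<le> 1 + \<eta>"
    using f3 ay0 by (simp add: field_simps)
  have f1: "(T + R) / T \<le> 1 + \<eta>"
  proof -
    have "R \<le> \<eta> * T" using T e0 by (simp add: field_simps)
    then show ?thesis using T by (simp add: field_simps)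
  qed
  have f2: "(\<sigma> + \<sigma>1) / \<sigma> = 1 + \<eta>" using s1eq sg by (simp add: field_simps)
  have eq: "pi / T * ((L + \<delta> / 2) * (T + R) * (\<sigma> + \<sigma>1) / (2 * \<sigma> * arctan y))
      = (L + \<delta> / 2) * (((T + R) / T) * ((\<sigma> + \<sigma>1) / \<sigma>) * (pi / (2 * arctan y)))"
    using T sg ay0 by (simp add: field_simps)
  have "((T + R) / T) * ((\<sigma> + \<sigma>1) / \<sigma>) * (pi / (2 * arctan y)) \<le> (1 + \<eta>) * (1 + \<eta>) * (1 + \<eta>)"
  proof -
    have p1: "(T + R) / T \<ge> 0" using T R0 by simp
    have p3: "pi / (2 * arctan y) \<ge> 0" using ay0 by simp
    show ?thesis using f1 f2 f3' p1 p3 e0 by (intro mult_mono) auto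
  qed
  also have "\<dots> \<le> 1 + 7 * \<eta>" using e0 by (simp add: algebra_simps) (smt (verit) mult_left_le_one_le mult_nonneg_nonneg)
  finally have P: "((T + R) / T) * ((\<sigma> + \<sigma>1) / \<sigma>) * (pi / (2 * arctan y)) \<le> 1 + 7 * \<eta>" .
  have "(L + \<delta> / 2) * (((T + R) / T) * ((\<sigma> + \<sigma>1) / \<sigma>) * (pi / (2 * arctan y))) \<le> (L + \<delta> / 2) * (1 + 7 * \<eta>)"
    using P L d by (intro mult_left_mono) auto
  also have "\<dots> \<le> L + \<delta>"
  proof -
    have "(L + \<delta> / 2) * (1 + 7 * \<eta>) = L + \<delta> / 2 + \<eta> * (14 * L + 7 * \<delta>) / 2"
      by (simp add: algebra_simps)
    then show ?thesis using e1 by simp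
  qed
  finally show ?thesis using eq unfolding y_def by simp
qed

lemma mob_lt1:
  assumes w: "cmod w < 1" and x: "cmod \<xi> < 1"
  shows "1 - cnj \<xi> * w \<noteq> 0 \<and> cmod ((w - \<xi>) / (1 - cnj \<xi> * w)) < 1"
proof -
  have id: "(cmod (1 - cnj \<xi> * w))^2 - (cmod (w - \<xi>))^2 = (1 - (cmod w)^2) * (1 - (cmod \<xi>)^2)"
    unfolding cmod_power2 by (simp add: algebra_simps power2_eq_square)
  have w2: "(cmod w)^2 < 1" using w by (metis abs_norm_cancel abs_square_less_1)
  have x2: "(cmod \<xi>)^2 < 1" using x by (metis abs_norm_cancel abs_square_less_1)
  have pos: "(1 - (cmod w)^2) * (1 - (cmod \<xi>)^2) > 0" using w2 x2 by simp
  then have lt: "(cmod (w - \<xi>))^2 < (cmod (1 - cnj \<xi> * w))^2" using id by linarith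
  have nz: "1 - cnj \<xi> * w \<noteq> 0"
  proof
    assume "1 - cnj \<xi> * w = 0"
    then have "(cmod (w - \<xi>))^2 < 0" using lt by simp
    then show False using zero_le_power2[of "cmod (w - \<xi>)"] by linarith
  qed
  have "cmod (w - \<xi>) < cmod (1 - cnj \<xi> * w)" using lt by (simp add: power2_less_imp_less)
  then show ?thesis using nz by (simp add: norm_divide)
qed


lemma ordge_of_zero:
  assumes holo: "f holomorphic_on {z. Re z > 0}" and s: "Re s > 0"
    and ex: "\<exists>w. Re w > 0 \<and> f w \<noteq> \<xi>"
  shows "ordge (\<lambda>z. f z - \<xi>) s (nat (zorder (\<lambda>z. f z - \<xi>) s))"
proof -
  have h2: "(\<lambda>z. f z - \<xi>) holomorphic_on {z. Re z > 0}" by (intro holomorphic_intros holo)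
  have conn: "connected {z::complex. Re z > 0}" by (rule convex_connected[OF convex_halfspace_Re_gt])
  have ex2: "\<exists>w\<in>{z. Re z > 0}. f w - \<xi> \<noteq> 0" using ex by auto
  have sS: "s \<in> {z. Re z > 0}" using s by simp
  obtain r where r: "r > 0" "zor_poly (\<lambda>z. f z - \<xi>) s holomorphic_on cball s r"
    "\<forall>w\<in>cball s r. f w - \<xi> = zor_poly (\<lambda>z. f z - \<xi>) s w * (w - s) ^ nat (zorder (\<lambda>z. f z - \<xi>) s)"
    using zorder_exist_zero[OF h2 openH conn sS ex2] by blast
  have "zor_poly (\<lambda>z. f z - \<xi>) s holomorphic_on ball s r"
    using r(2) by (rule holomorphic_on_subset) auto
  moreover have "\<forall>z\<in>ball s r - {s}. f z - \<xi> = (z - s) ^ nat (zorder (\<lambda>z. f z - \<xi>) s) * zor_poly (\<lambda>z. f z - \<xi>) s z"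
    using r(3) by (auto simp: mult.commute)
  ultimately show ?thesis unfolding ordge_def using r(1) by blast
qed

theorem theorem5p4:
  fixes f :: "complex \<Rightarrow> complex" and a :: "nat \<Rightarrow> complex" and \<xi> :: complex
  assumes "dirichlet_C0_to_D f a"
    and "\<xi> \<in> ball 0 1" and "\<xi> \<noteq> a 1"
  shows "Limsup at_top (\<lambda>T. N_count f \<xi> T)
           \<le> ereal (ln (cmod ((1 - cnj \<xi> * a 1) / (\<xi> - a 1))))"
proof -
  have Hdef: "halfplane 0 = {z. Re z > 0}" by (simp add: halfplane_def)
  have holo: "f holomorphic_on {z. Re z > 0}"
    and fin: "\<forall>s\<in>{z. Re z > 0}. f s \<in> ball 0 1"
    and dir: "\<exists>\<kappa>>0. \<forall>s\<in>halfplane \<kappa>. (\<lambda>n. a (Suc n) * of_nat (Suc n) powr (- s)) sums f s"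
    using assms(1) unfolding dirichlet_C0_to_D_def Hdef by blast+
  have a1: "cmod (a 1) < 1" by (rule a1_lt1[OF assms(1)])
  have xi: "cmod \<xi> < 1" using assms(2) by simp
  have fb: "cmod (f z) < 1" if "Re z > 0" for z using fin that by auto
  define M where "M w = (w - \<xi>) / (1 - cnj \<xi> * w)" for w
  define G where "G z = M (f z)" for z
  have den: "1 - cnj \<xi> * f z \<noteq> 0" if "Re z > 0" for z using mob_lt1[OF fb[OF that] xi] by blast
  have Gholo: "G holomorphic_on {z. Re z > 0}"
    unfolding G_def M_def by (intro holomorphic_intros holo) (use den in auto)
  have Gbd: "\<forall>z. Re z > 0 \<longrightarrow> cmod (G z) \<le> 1"
    using mob_lt1[OF fb xi] unfolding G_def M_def by (auto simp: less_imp_le)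
  have den1: "1 - cnj \<xi> * a 1 \<noteq> 0" using mob_lt1[OF a1 xi] by blast
  define c where "c = cmod (M (a 1))"
  have c0: "c > 0" unfolding c_def M_def using den1 assms(3) by auto
  have c1: "c < 1" unfolding c_def M_def using mob_lt1[OF a1 xi] by blast
  define L where "L = - ln c"
  have L0: "L \<ge> 0" unfolding L_def using c0 c1 by simp
  have rhs: "ln (cmod ((1 - cnj \<xi> * a 1) / (\<xi> - a 1))) = L"
  proof -
    have "cmod ((1 - cnj \<xi> * a 1) / (\<xi> - a 1)) = inverse c"
      unfolding c_def M_def by (simp add: norm_divide norm_minus_commute)
    then show ?thesis unfolding L_def using c0 by (simp add: ln_inverse)
  qed
  have unif: "\<exists>\<sigma>1>0. \<forall>z. Re z \<ge> \<sigma>1 \<longrightarrow> cmod (G z) \<ge> c - \<epsilon>" if ep: "\<epsilon> > 0" for \<epsilon>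
  proof -
    have "isCont M (a 1)" unfolding M_def using den1 by (intro continuous_intros) auto
    then obtain \<eta> where eta: "\<eta> > 0" "\<forall>w. dist w (a 1) < \<eta> \<longrightarrow> dist (M w) (M (a 1)) < \<epsilon>"
      using ep unfolding continuous_at_eps_delta by blast
    obtain \<sigma>0 where s0: "\<sigma>0 > 0" "\<forall>z. Re z \<ge> \<sigma>0 \<longrightarrow> cmod (f z - a 1) \<le> \<eta> / 2"
      using dir_unif[OF dir] eta(1) by (meson half_gt_zero)
    have "cmod (G z) \<ge> c - \<epsilon>" if z: "Re z \<ge> \<sigma>0" for z
    proof -
      have "dist (f z) (a 1) < \<eta>" using s0(2) z eta(1) by (simp add: dist_norm) (smt (verit) field_sum_of_halves)
      then have d: "dist (M (f z)) (M (a 1)) < \<epsilon>" using eta(2) by blast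
      have "c \<le> cmod (M (f z)) + dist (M (f z)) (M (a 1))"
        unfolding c_def dist_norm by (metis norm_minus_commute norm_triangle_sub)
      then show ?thesis using d unfolding G_def by linarith
    qed
    then show ?thesis using s0(1) by blast
  qed
  have key: "eventually (\<lambda>T. N_count f \<xi> T \<le> ereal (L + \<delta>)) at_top" if d: "\<delta> > 0" for \<delta>
  proof -
    define \<epsilon> where "\<epsilon> = c * (1 - exp (- \<delta> / 2))"
    have ep: "\<epsilon> > 0" unfolding \<epsilon>_def using c0 d by simp
    obtain \<sigma>1 where s1: "\<sigma>1 > 0" "\<forall>z. Re z \<ge> \<sigma>1 \<longrightarrow> cmod (G z) \<ge> c - \<epsilon>"
      using unif[OF ep] by blast
    define c' where "c' = c - \<epsilon>"
    have c'eq: "c' = c * exp (- \<delta> / 2)" unfolding c'_def \<epsilon>_def by (simp add: algebra_simps)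
    have c'0: "c' > 0" using c'eq c0 by simp
    have Lc': "- ln c' = L + \<delta> / 2" unfolding c'eq L_def using c0 by (simp add: ln_mult)
    define \<eta> where "\<eta> = min 1 (\<delta> / (14 * L + 7 * \<delta>))"
    have e0: "\<eta> > 0" "\<eta> \<le> 1" unfolding \<eta>_def using L0 d by auto
    define \<sigma> where "\<sigma> = \<sigma>1 / \<eta>"
    define R where "R = 2 * \<sigma> * (1 + \<eta>) / \<eta>"
    have sg: "\<sigma> \<ge> \<sigma>1" "\<sigma> > 0" unfolding \<sigma>_def using e0 s1(1) by (auto simp: field_simps)
    have R0: "R > 0" unfolding R_def using sg e0 by simp
    have exw: "\<exists>w. Re w > 0 \<and> f w \<noteq> \<xi>"
    proof (intro exI conjI)
      show "Re (complex_of_real \<sigma>1) > 0" using s1(1) by simp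
      have "cmod (G (complex_of_real \<sigma>1)) \<ge> c'" using s1(2) unfolding c'_def by simp
      then have "G (complex_of_real \<sigma>1) \<noteq> 0" using c'0 by auto
      then show "f (complex_of_real \<sigma>1) \<noteq> \<xi>" unfolding G_def M_def by auto
    qed
    have "eventually (\<lambda>T. T \<ge> R / \<eta> \<and> T > 0) at_top"
      by (intro eventually_conj eventually_ge_at_top eventually_gt_at_top)
    then show ?thesis
    proof (rule eventually_mono)
      fix T :: real assume T: "T \<ge> R / \<eta> \<and> T > 0"
      define Z where "Z = {s\<in>halfplane 0. \<bar>Im s\<bar> < T \<and> f s = \<xi>}"
      define m where "m s = nat (zorder (\<lambda>z. f z - \<xi>) s)" for s
      define B where "B = (L + \<delta> / 2) * (T + R) * (\<sigma> + \<sigma>1) / (2 * \<sigma> * arctan (R / (2 * \<sigma>)))"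
      have B0: "B \<ge> 0" unfolding B_def using L0 d T R0 sg s1(1) by simp
      have finsum: "(\<Sum>s\<in>F. real (m s) * Re s) \<le> B" if F: "finite F" "F \<subseteq> Z" for F
      proof -
        have FH: "F \<subseteq> {z. Re z > 0}" using F(2) unfolding Z_def Hdef by auto
        have ord: "\<forall>s\<in>F. ordge G s (m s)"
        proof
          fix s assume s: "s \<in> F"
          have sp: "Re s > 0" using s FH by auto
          have "ordge (\<lambda>z. f z - \<xi>) s (m s)" unfolding m_def using ordge_of_zero[OF holo sp exw] .
          moreover have "(\<lambda>z. 1 / (1 - cnj \<xi> * f z)) holomorphic_on {z. Re z > 0}"
            by (intro holomorphic_intros holo) (use den in auto)
          ultimately show "ordge G s (m s)"
            by (rule ordge_mult[OF _ sp]) (simp add: G_def M_def)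
        qed
        have Fp: "\<forall>s\<in>F. 0 < Re s \<and> Re s < \<sigma>1 \<and> \<bar>Im s\<bar> < T"
        proof
          fix s assume s: "s \<in> F"
          have sZ: "Re s > 0" "\<bar>Im s\<bar> < T" "f s = \<xi>" using s F(2) unfolding Z_def Hdef by auto
          have "G s = 0" using sZ(3) unfolding G_def M_def by simp
          then have "\<not> Re s \<ge> \<sigma>1" using s1(2) c'0 unfolding c'_def by force
          then show "0 < Re s \<and> Re s < \<sigma>1 \<and> \<bar>Im s\<bar> < T" using sZ by auto
        qed
        have pt: "(\<Sum>s\<in>F. real (m s) * wk \<sigma> s t) \<le> 2 * (L + \<delta> / 2)" for t
        proof -
          have "cmod (G (Complex \<sigma> t)) \<ge> c'" using s1(2) sg unfolding c'_def by simp
          from core1[OF Gholo Gbd F(1) FH ord sg(2) c'0 this] show ?thesis unfolding Lc' .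
        qed
        show ?thesis unfolding B_def
          by (rule core2[OF F(1) Fp sg(1) s1(1) R0 conjunct2[OF T] pt])
      qed
      have "infsum (\<lambda>s. ennreal (real (m s) * Re s)) Z \<le> ennreal B"
      proof (rule infsum_le_finite_sums)
        show "(\<lambda>s. ennreal (real (m s) * Re s)) summable_on Z"
          by (rule nonneg_summable_on_complete) simp
        fix F assume F: "finite F" "F \<subseteq> Z"
        have "(\<Sum>s\<in>F. ennreal (real (m s) * Re s)) = ennreal (\<Sum>s\<in>F. real (m s) * Re s)"
          using F(2) unfolding Z_def Hdef by (intro sum_ennreal) auto
        also have "\<dots> \<le> ennreal B" using finsum[OF F] by (rule ennreal_leI)
        finally show "(\<Sum>s\<in>F. ennreal (real (m s) * Re s)) \<le> ennreal B" .
      qed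
      then have le1: "enn2ereal (infsum (\<lambda>s. ennreal (real (m s) * Re s)) Z) \<le> ereal B"
        using B0 by (metis enn2ereal_ennreal less_eq_ennreal.rep_eq)
      have "N_count f \<xi> T = ereal (pi / T) * enn2ereal (infsum (\<lambda>s. ennreal (real (m s) * Re s)) Z)"
        unfolding N_count_def Z_def m_def ..
      also have "\<dots> \<le> ereal (pi / T) * ereal B"
        using le1 T by (intro ereal_mult_left_mono) auto
      also have "\<dots> = ereal (pi / T * B)" by simp
      also have "\<dots> \<le> ereal (L + \<delta>)"
        unfolding B_def using final_arith[OF L0 d s1(1) \<eta>_def \<sigma>_def R_def] T by simp
      finally show "N_count f \<xi> T \<le> ereal (L + \<delta>)" .
    qed
  qed
  have "Limsup at_top (\<lambda>T. N_count f \<xi> T) \<le> ereal L"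
  proof (rule ereal_le_epsilon2)
    fix e :: real assume e: "e > 0"
    have "Limsup at_top (\<lambda>T. N_count f \<xi> T) \<le> ereal (L + e)"
      by (rule Limsup_bounded[OF key[OF e]])
    then show "Limsup at_top (\<lambda>T. N_count f \<xi> T) \<le> ereal L + ereal e" by simp
  qed
  then show ?thesis unfolding rhs .
qed


end
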